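(* Let $m>n$ be coprime positive integers, $\lambda\in X$, $\Lambda=x(\lambda)$ and $\alpha=\epsilon_i-\delta_j$ ($i\in[n]$, $j\in[m]$). If $\Lambda\in\Pi_\alpha$, then either $\lambda\in X_\alpha$, or $(m,1^{n-1})\subseteq\lambda$ (i.e. $\lambda_1=m$ and $\lambda_n\ge1$) and $\alpha=\epsilon_n-\delta_1$.
   Context: $X$ is the set of partitions $\lambda=(\lambda_1\ge\dots\ge\lambda_n\ge0)$ with $\lambda_1\le m$, drawn in an $n\times m$ rectangle with rows $\epsilon_1,\dots,\epsilon_n$ top to bottom and columns $\delta_1,\dots,\delta_m$; the diagram consists of boxes $\epsilon_i-\delta_j$ with $j\le\lambda_{n+1-i}$; $\lambda'_j=\#\{i:\lambda_i\ge j\}$. $X_\alpha$ is the set of $\lambda$ for which the box $\alpha$ is an outer corner (not in $\lambda$, and adding it gives an element of $X$). $x(\lambda)=(a_1,\dots,a_n|b_1,\dots,b_m)$ with $a_i=m(n-i)+n\lambda_{n+1-i}$, $b_j=n(j-1)+m\lambda'_j$. $\Pi_\alpha=\{\Lambda: a_i=b_j\}$. *)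

theory Defs
  imports Main
begin

text \<open>A partition lambda = (lambda_1 >= ... >= lambda_n >= 0) with lambda_1 <= m is
  represented by a function nat => nat whose values at 1..n are the parts
  (and which is 0 outside 1..n, for canonicity).\<close>
definition partX :: "nat \<Rightarrow> nat \<Rightarrow> (nat \<Rightarrow> nat) set" where
  "partX n m = {lam. (\<forall>i. 1 \<le> i \<and> i < n \<longrightarrow> lam (Suc i) \<le> lam i)
                    \<and> (\<forall>i\<in>{1..n}. lam i \<le> m)
                    \<and> (\<forall>i. i \<notin> {1..n} \<longrightarrow> lam i = 0)}"

definition conj_part :: "nat \<Rightarrow> (nat \<Rightarrow> nat) \<Rightarrow> nat \<Rightarrow> nat" where
  "conj_part n lam j = card {i \<in> {1..n}. lam i \<ge> j}"

text \<open>Young diagram in the n x m rectangle: box (i,j) stands for epsilon_i - delta_j;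
  row i (top to bottom) contains the boxes j <= lambda_{n+1-i}.\<close>
definition diagram :: "nat \<Rightarrow> nat \<Rightarrow> (nat \<Rightarrow> nat) \<Rightarrow> (nat \<times> nat) set" where
  "diagram n m lam = {(i, j). i \<in> {1..n} \<and> j \<in> {1..m} \<and> j \<le> lam (n + 1 - i)}"

text \<open>X_alpha: partitions for which box alpha is an outer corner (not in lambda,
  and adding it gives the diagram of an element of X).\<close>
definition outer_corner_set :: "nat \<Rightarrow> nat \<Rightarrow> nat \<times> nat \<Rightarrow> (nat \<Rightarrow> nat) set" where
  "outer_corner_set n m \<alpha> = {lam \<in> partX n m. \<alpha> \<notin> diagram n m lam \<and>
      (\<exists>mu \<in> partX n m. diagram n m mu = insert \<alpha> (diagram n m lam))}"

definition coord_a :: "nat \<Rightarrow> nat \<Rightarrow> (nat \<Rightarrow> nat) \<Rightarrow> nat \<Rightarrow> nat" where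
  "coord_a n m lam i = m * (n - i) + n * lam (n + 1 - i)"

definition coord_b :: "nat \<Rightarrow> nat \<Rightarrow> (nat \<Rightarrow> nat) \<Rightarrow> nat \<Rightarrow> nat" where
  "coord_b n m lam j = n * (j - 1) + m * conj_part n lam j"

text \<open>x(lambda) lies in Pi_alpha for alpha = epsilon_i - delta_j iff a_i = b_j.\<close>
definition in_Pi :: "nat \<Rightarrow> nat \<Rightarrow> (nat \<Rightarrow> nat) \<Rightarrow> nat \<times> nat \<Rightarrow> bool" where
  "in_Pi n m lam \<alpha> \<longleftrightarrow> coord_a n m lam (fst \<alpha>) = coord_b n m lam (snd \<alpha>)"

end

theory Submission
  imports Defs
begin

lemma partX_mono:
  assumes "lam \<in> partX n m" "1 \<le> a" "a \<le> b" "b \<le> n"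
  shows "lam b \<le> lam a"
  using assms(3,4)
proof (induction b rule: dec_induct)
  case base then show ?case by simp
next
  case (step k)
  have "lam (Suc k) \<le> lam k" using assms(1,2) step by (auto simp: partX_def)
  then show ?case using step by simp
qed

lemma L_le:
  assumes "lam \<in> partX n m" "k \<in> {1..n}" "lam k < j"
  shows "conj_part n lam j \<le> k - 1"
proof -
  have "{x \<in> {1..n}. lam x \<ge> j} \<subseteq> {1..k-1}"
  proof
    fix x assume x: "x \<in> {x \<in> {1..n}. lam x \<ge> j}"
    show "x \<in> {1..k-1}"
    proof (rule ccontr)
      assume "x \<notin> {1..k-1}"
      then have "k \<le> x" using x by auto
      then have "lam x \<le> lam k" using partX_mono[OF assms(1)] assms(2) x by auto
      then show False using x assms(3) by auto
    qed
  qed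
  then show ?thesis unfolding conj_part_def using card_mono[of "{1..k-1}"] by fastforce
qed

lemma L_ge:
  assumes "lam \<in> partX n m" "k \<in> {1..n}" "lam k \<ge> j"
  shows "conj_part n lam j \<ge> k"
proof -
  have "{1..k} \<subseteq> {x \<in> {1..n}. lam x \<ge> j}"
  proof
    fix x assume x: "x \<in> {1..k}"
    then have "lam k \<le> lam x" using partX_mono[OF assms(1)] assms(2) by auto
    then show "x \<in> {x \<in> {1..n}. lam x \<ge> j}" using x assms by auto
  qed
  then show ?thesis unfolding conj_part_def using card_mono[of "{x \<in> {1..n}. lam x \<ge> j}" "{1..k}"] by fastforce
qed

lemma L_le_n: "conj_part n lam j \<le> n"
  unfolding conj_part_def using card_mono[of "{1..n}" "{x \<in> {1..n}. lam x \<ge> j}"] by fastforce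

lemma dvd_range:
  fixes d x :: int
  assumes "x dvd d" "-x \<le> d" "d < x" "0 < x"
  shows "d = 0 \<or> d = -x"
proof -
  obtain k where k: "d = x * k" using assms(1) by auto
  have "k < 1"
  proof (rule ccontr)
    assume "\<not> k < 1" then have "x * 1 \<le> x * k" using assms(4) by (intro mult_left_mono) auto
    then show False using k assms(3) by simp
  qed
  moreover have "k \<ge> -1"
  proof (rule ccontr)
    assume "\<not> k \<ge> -1" then have "x * k \<le> x * (-2)" using assms(4) by (intro mult_left_mono) auto
    then show False using k assms(2,4) by simp
  qed
  ultimately have "k = 0 \<or> k = -1" by auto
  then show ?thesis using k by auto
qed

lemma eq_int:
  fixes m n a b c d :: nat
  assumes "m * a + n * b = n * c + m * d"
  shows "int m * (int a - int d) = int n * (int c - int b)"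
proof -
  have "int (m * a + n * b) = int (n * c + m * d)" using assms by simp
  then have "int m * int a + int n * int b = int n * int c + int m * int d"
    by (simp only: of_nat_add of_nat_mult)
  then show ?thesis by (simp add: algebra_simps)
qed

theorem lemma4p5:
  fixes n m i j :: nat and lam :: "nat \<Rightarrow> nat"
  assumes "0 < n" and "n < m" and "coprime m n"
    and "lam \<in> partX n m"
    and "i \<in> {1..n}" and "j \<in> {1..m}"
    and "in_Pi n m lam (i, j)"
  shows "lam \<in> outer_corner_set n m (i, j)
         \<or> (lam 1 = m \<and> lam n \<ge> 1 \<and> (i, j) = (n, 1))"
proof -
  define r where "r = n + 1 - i"
  define L where "L = conj_part n lam j"
  have r: "r \<in> {1..n}" "n - i = r - 1" using assms(5) by (auto simp: r_def)
  have lr: "lam r \<le> m" using assms(4) r by (auto simp: partX_def)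
  have Ln: "L \<le> n" unfolding L_def by (rule L_le_n)
  have E0: "m * (n - i) + n * lam (n + 1 - i) = n * (j - 1) + m * L"
    using assms(7) unfolding in_Pi_def coord_a_def coord_b_def L_def by simp
  have E: "m * (r - 1) + n * lam r = n * (j - 1) + m * L"
    using E0 unfolding r(2) by (simp add: r_def)
  have EI: "int m * (int (r - 1) - int L) = int n * (int (j - 1) - int (lam r))"
    by (rule eq_int[OF E])
  have cop: "coprime (int m) (int n)" using assms(3) by simp
  have "int n dvd int m * (int (r - 1) - int L)" unfolding EI by simp
  then have d1: "int n dvd (int (r - 1) - int L)"
    using cop by (simp add: coprime_commute coprime_dvd_mult_right_iff)
  have "int m dvd int n * (int (j - 1) - int (lam r))" unfolding EI[symmetric] by simp
  then have d2: "int m dvd (int (j - 1) - int (lam r))"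
    using cop by (simp add: coprime_dvd_mult_right_iff)
  have c1: "r - 1 = L \<or> (r - 1 = 0 \<and> L = n)"
    using dvd_range[OF d1] r Ln assms(1) by auto
  have c2: "lam r = j - 1 \<or> (j - 1 = 0 \<and> lam r = m)"
    using dvd_range[OF d2] lr assms(2,6) by auto
  show ?thesis
  proof (cases "r - 1 = L")
    case True
    note rL = True
    show ?thesis
    proof (cases "lam r = j - 1")
      case True
      have lt: "lam r < j" using True assms(6) by auto
      have above: "\<And>k. k \<in> {1..n} \<Longrightarrow> k < r \<Longrightarrow> j \<le> lam k"
      proof (rule ccontr)
        fix k assume k: "k \<in> {1..n}" "k < r" "\<not> j \<le> lam k"
        then have "L \<le> k - 1" unfolding L_def using L_le[OF assms(4)] by auto
        then show False using rL k by auto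
      qed
      define mu where "mu = lam(r := j)"
      have mu: "mu \<in> partX n m"
        unfolding partX_def
      proof (intro CollectI conjI allI impI ballI)
        fix k assume k: "1 \<le> k \<and> k < n"
        have lk: "lam (Suc k) \<le> lam k" using assms(4) k by (auto simp: partX_def)
        show "mu (Suc k) \<le> mu k"
        proof (cases "Suc k = r")
          case True then show ?thesis using above[of k] k by (auto simp: mu_def)
        next
          case False
          then show ?thesis using lk lt by (auto simp: mu_def)
        qed
      next
        fix k assume "k \<in> {1..n}" then show "mu k \<le> m"
          using assms(4,6) by (auto simp: mu_def partX_def)
      next
        fix k assume "k \<notin> {1..n}" then show "mu k = 0"
          using assms(4) r by (auto simp: mu_def partX_def)
      qed
      have notin: "(i, j) \<notin> diagram n m lam"
        using lt by (auto simp: diagram_def r_def)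
      have "diagram n m mu = insert (i, j) (diagram n m lam)"
      proof (intro set_eqI iffI)
        fix p assume "p \<in> diagram n m mu"
        then show "p \<in> insert (i, j) (diagram n m lam)"
          using True assms(5,6) by (cases p) (auto simp: diagram_def mu_def r_def split: if_splits)
      next
        fix p assume "p \<in> insert (i, j) (diagram n m lam)"
        then show "p \<in> diagram n m mu"
          using True assms(5,6) lt by (cases p) (auto simp: diagram_def mu_def r_def)
      qed
      then have "lam \<in> outer_corner_set n m (i, j)"
        using mu notin assms(4) by (auto simp: outer_corner_set_def)
      then show ?thesis by simp
    next
      case False
      then have "j = 1" "lam r = m" using c2 assms(6) by auto
      then have "L \<ge> r" unfolding L_def using L_ge[OF assms(4) r(1)] assms(2) by auto
      then show ?thesis using rL r by auto
    qed
  next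
    case False
    then have r1: "r = 1" "L = n" using c1 r by auto
    show ?thesis
    proof (cases "lam r = j - 1")
      case True
      then have "lam 1 < j" using r1 assms(6) by auto
      then have "L \<le> 0" unfolding L_def using L_le[OF assms(4), of 1] assms(1) by auto
      then show ?thesis using r1 assms(1) by auto
    next
      case False
      then have j1: "j = 1" "lam 1 = m" using c2 assms(6) r1 by auto
      have "lam n \<ge> 1"
      proof (rule ccontr)
        assume "\<not> lam n \<ge> 1"
        then have "L \<le> n - 1" unfolding L_def using L_le[OF assms(4), of n] assms(1) j1 by auto
        then show False using r1 assms(1) by auto
      qed
      moreover have "i = n" using r1 assms(5) by (auto simp: r_def)
      ultimately show ?thesis using j1 by auto
    qed
  qed
qed

end
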